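(* Let $n\geq 1$ and let $X=(\pi,w)$ be a weighted permutation of degree $n$ with total weight $|w|_1=\sum_{i=1}^n w_i\leq 2$. Then $X$ and $X^\dagger$ have the same weighted cycle type.
   Context: Let $\mathfrak{S}_n$ be the symmetric group on $\{1,\ldots,n\}$. A weighted permutation of degree $n$ is a pair $(\pi,w)$ with $\pi\in\mathfrak{S}_n$ and $w=[w_1,\ldots,w_n]\in\mathbb{Z}_{\geq 0}^n$. Its involution is $(\pi,w)^\dagger=(\pi^{-1},w_{\pi^{-1}})$, where $w_{\pi^{-1}}=[w_{\pi^{-1}(1)},\ldots,w_{\pi^{-1}(n)}]$. To $(\pi,w)$ associate the edge-weighted directed graph $G(\pi,w)$ on vertex set $\{1,\ldots,n\}$ having, for each $i$, one directed edge from $i$ to $\pi(i)$ with weight $w_i$ (a disjoint union of directed cycles). The weighted cycle type of $(\pi,w)$ is the isomorphism class of $G(\pi,w)$, where two such graphs are isomorphic if there is a bijection $f$ of vertex sets such that there is an edge of weight $a$ from $v_1$ to $v_2$ iff there is an edge of weight $a$ from $f(v_1)$ to $f(v_2)$. (Equivalently, weighted cycle types are the orbits of weighted permutations under conjugation $X\mapsto (\sigma,\mathbf{0})X(\sigma^{-1},\mathbf{0})$, $\sigma\in\mathfrak{S}_n$, with multiplication $(\pi,w)\cdot(\pi',w')=(\pi\pi',w_{\pi'}+w')$, $w_{\pi'}=[w_{\pi'(1)},\ldots,w_{\pi'(n)}]$.) *)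

theory Defs
  imports "HOL-Combinatorics.Permutations"
begin

text \<open>A weighted permutation of degree n: a pair (pi, w) with pi a permutation of {1..n}
  and w a weight vector indexed by {1..n} (values of w outside {1..n} are irrelevant).\<close>
definition weighted_perm :: "nat \<Rightarrow> (nat \<Rightarrow> nat) \<times> (nat \<Rightarrow> nat) \<Rightarrow> bool" where
  "weighted_perm n X \<longleftrightarrow> fst X permutes {1..n}"

definition wdagger :: "(nat \<Rightarrow> nat) \<times> (nat \<Rightarrow> nat) \<Rightarrow> (nat \<Rightarrow> nat) \<times> (nat \<Rightarrow> nat)" where
  "wdagger X = (inv (fst X), (\<lambda>i. snd X (inv (fst X) i)))"

definition wedge :: "nat \<Rightarrow> (nat \<Rightarrow> nat) \<times> (nat \<Rightarrow> nat) \<Rightarrow> nat \<Rightarrow> nat \<Rightarrow> nat \<Rightarrow> bool" where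
  "wedge n X i j a \<longleftrightarrow> i \<in> {1..n} \<and> j = fst X i \<and> a = snd X i"

text \<open>Same weighted cycle type: G(X) and G(Y) are isomorphic as edge-weighted digraphs
  on vertex set {1..n}.\<close>
definition same_wct :: "nat \<Rightarrow> (nat \<Rightarrow> nat) \<times> (nat \<Rightarrow> nat) \<Rightarrow> (nat \<Rightarrow> nat) \<times> (nat \<Rightarrow> nat) \<Rightarrow> bool" where
  "same_wct n X Y \<longleftrightarrow> (\<exists>f. bij_betw f {1..n} {1..n} \<and>
     (\<forall>v1\<in>{1..n}. \<forall>v2\<in>{1..n}. \<forall>a. wedge n X v1 v2 a \<longleftrightarrow> wedge n Y (f v1) (f v2) a))"

end

theory Submission
  imports Defs "HOL-Combinatorics.Cycles"
begin

locale wp =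
  fixes P :: "nat \<Rightarrow> nat" and N :: nat and w :: "nat \<Rightarrow> nat" and S :: "nat set"
  assumes PN: "P ^^ N = id" and Npos: "0 < N"
    and Pcl: "x \<in> S \<Longrightarrow> P x \<in> S"
    and good: "x \<in> S \<Longrightarrow> \<exists>p q. p \<in> range (\<lambda>k. (P^^k) x) \<and> q \<in> range (\<lambda>k. (P^^k) x)
         \<and> w p = w q \<and> (\<forall>y\<in>range (\<lambda>k. (P^^k) x). w y \<noteq> 0 \<longrightarrow> y = p \<or> y = q)"
begin

definition orb :: "nat \<Rightarrow> nat set" where "orb x = range (\<lambda>k. (P^^k) x)"

definition sel :: "nat set \<Rightarrow> nat \<times> nat" where
  "sel Ob = (SOME (p,q). p \<in> Ob \<and> q \<in> Ob \<and> w p = w q \<and> (\<forall>y\<in>Ob. w y \<noteq> 0 \<longrightarrow> y = p \<or> y = q))"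

definition M :: nat where "M = N - 1"

definition rho :: "nat \<Rightarrow> nat" where
  "rho x = (let (p,q) = sel (orb x); k = (SOME k. (P^^k) p = x) in (P^^(M*k)) q)"

lemma powN: "(P ^^ (N*k)) = id"
  by (metis PN funpow_mult id_funpow)

lemma MN: "M * k + k = N * k"
  using Npos unfolding M_def by (simp add: algebra_simps)

lemma inv1: "(P^^(M*k)) ((P^^k) x) = x"
proof -
  have "(P^^(M*k)) ((P^^k) x) = (P^^(M*k+k)) x" by (simp add: funpow_add)
  also have "\<dots> = x" using MN powN by simp
  finally show ?thesis .
qed

lemma comm: "(P^^a) ((P^^b) x) = (P^^b) ((P^^a) x)"
  by (metis funpow_add add.commute comp_apply)

lemma inv2: "(P^^k) ((P^^(M*k)) x) = x"
  using comm[of k "M*k" x] inv1[of k x] by simp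

lemma pinj: "(P^^k) x = (P^^k) y \<Longrightarrow> x = y"
  by (metis inv1)

lemma orb_self: "x \<in> orb x"
  unfolding orb_def by (metis funpow_0 rangeI)

lemma orb_P: "P x \<in> orb x"
  unfolding orb_def using rangeI[of "\<lambda>k. (P^^k) x" 1] by simp

lemma orb_eq: assumes "y \<in> orb x" shows "orb y = orb x"
proof -
  obtain k where k: "y = (P^^k) x" using assms unfolding orb_def by auto
  have A: "orb ((P^^k) z) \<subseteq> orb z" for k z
  proof
    fix u assume "u \<in> orb ((P^^k) z)"
    then obtain j where "u = (P^^j) ((P^^k) z)" unfolding orb_def by auto
    then have "u = (P^^(j+k)) z" by (simp add: funpow_add)
    then show "u \<in> orb z" unfolding orb_def by blast
  qed
  have "orb y \<subseteq> orb x" using A k by blast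
  moreover have "orb x \<subseteq> orb y" using A[of "M*k" y] inv1[of k x] k by simp
  ultimately show ?thesis by blast
qed

lemma orb_S: assumes "x \<in> S" shows "orb x \<subseteq> S"
proof -
  have "(P^^k) x \<in> S" for k by (induction k) (auto simp: assms Pcl)
  then show ?thesis unfolding orb_def by auto
qed

lemma sel_prop: assumes "x \<in> S" "sel (orb x) = (p,q)"
  shows "p \<in> orb x \<and> q \<in> orb x \<and> w p = w q \<and> (\<forall>y\<in>orb x. w y \<noteq> 0 \<longrightarrow> y = p \<or> y = q)"
proof -
  let ?Q = "\<lambda>(p,q). p \<in> orb x \<and> q \<in> orb x \<and> w p = w q \<and> (\<forall>y\<in>orb x. w y \<noteq> 0 \<longrightarrow> y = p \<or> y = q)"
  have "\<exists>pq. ?Q pq" using good[OF assms(1)] unfolding orb_def by auto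
  then have "?Q (SOME pq. ?Q pq)" by (rule someI_ex)
  then show ?thesis using assms(2) unfolding sel_def by simp
qed

lemma WD: assumes "(P^^k) p = (P^^j) p" "q \<in> orb p"
  shows "(P^^(M*k)) q = (P^^(M*j)) q"
proof -
  obtain b where b: "q = (P^^b) p" using assms(2) unfolding orb_def by auto
  have "(P^^(M*j)) ((P^^(M*k)) ((P^^k) p)) = (P^^(M*j)) ((P^^(M*k)) ((P^^j) p))"
    using assms(1) by simp
  then have "(P^^(M*j)) p = (P^^(M*k)) p"
    using inv1[of k p] inv1[of j p] comm[of "M*j" "M*k" "(P^^j) p"] by simp
  then show ?thesis unfolding b by (simp add: comm[of "M*k" b p] comm[of "M*j" b p])
qed

lemma rho_char: assumes "x \<in> S" "sel (orb x) = (p,q)" "(P^^k) p = x"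
  shows "rho x = (P^^(M*k)) q"
proof -
  have ex: "\<exists>k. (P^^k) p = x" using assms(3) by blast
  define k' where "k' = (SOME k. (P^^k) p = x)"
  have k': "(P^^k') p = x" unfolding k'_def by (rule someI_ex[OF ex])
  have "rho x = (P^^(M*k')) q" unfolding rho_def using assms(2) k'_def by simp
  also have "\<dots> = (P^^(M*k)) q"
  proof -
    have "q \<in> orb x" using sel_prop[OF assms(1,2)] by blast
    moreover have "orb p = orb x" using sel_prop[OF assms(1,2)] orb_eq by blast
    ultimately have "q \<in> orb p" by simp
    then show ?thesis using WD[of k' p k q] k' assms(3) by simp
  qed
  finally show ?thesis .
qed

lemma base: assumes "x \<in> S" "sel (orb x) = (p,q)"
  obtains k where "(P^^k) p = x"
proof -
  have "p \<in> orb x" using sel_prop[OF assms] by blast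
  then have "x \<in> orb p" using orb_eq orb_self by blast
  then show ?thesis using that unfolding orb_def by auto
qed

lemma rho_orb: assumes "x \<in> S" shows "rho x \<in> orb x"
proof -
  obtain p q where pq: "sel (orb x) = (p,q)" by fastforce
  obtain k where k: "(P^^k) p = x" using base[OF assms pq] by blast
  have "q \<in> orb x" using sel_prop[OF assms pq] by blast
  then show ?thesis using rho_char[OF assms pq k] orb_eq unfolding orb_def
    by (metis rangeI)
qed

lemma rho_S: "x \<in> S \<Longrightarrow> rho x \<in> S"
  using rho_orb orb_S by blast

lemma rho_P: assumes "x \<in> S" shows "rho (P x) = (P^^M) (rho x)"
proof -
  obtain p q where pq: "sel (orb x) = (p,q)" by fastforce
  obtain k where k: "(P^^k) p = x" using base[OF assms pq] by blast
  have S': "P x \<in> S" using Pcl assms .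
  have pq': "sel (orb (P x)) = (p,q)" using pq orb_eq[OF orb_P] by simp
  have k': "(P^^(Suc k)) p = P x" using k by simp
  have "rho (P x) = (P^^(M*Suc k)) q" using rho_char[OF S' pq' k'] .
  also have "\<dots> = (P^^M) ((P^^(M*k)) q)" by (simp add: funpow_add)
  also have "\<dots> = (P^^M) (rho x)" using rho_char[OF assms pq k] by simp
  finally show ?thesis .
qed

lemma rho_inj: assumes "x \<in> S" "y \<in> S" "rho x = rho y" shows "x = y"
proof -
  have "orb x = orb y" using orb_eq[OF rho_orb[OF assms(1)]] orb_eq[OF rho_orb[OF assms(2)]] assms(3) by simp
  obtain p q where pq: "sel (orb x) = (p,q)" by fastforce
  then have pq2: "sel (orb y) = (p,q)" using \<open>orb x = orb y\<close> by simp
  obtain k where k: "(P^^k) p = x" using base[OF assms(1) pq] by blast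
  obtain j where j: "(P^^j) p = y" using base[OF assms(2) pq2] by blast
  have e: "(P^^(M*k)) q = (P^^(M*j)) q"
    using rho_char[OF assms(1) pq k] rho_char[OF assms(2) pq2 j] assms(3) by simp
  have "(P^^j) ((P^^k) ((P^^(M*k)) q)) = (P^^k) ((P^^j) ((P^^(M*j)) q))"
    using e comm[of j k "(P^^(M*j)) q"] by simp
  then have "(P^^j) q = (P^^k) q" using inv2 by simp
  moreover obtain b where "q = (P^^b) p"
  proof -
    have "q \<in> orb p" using sel_prop[OF assms(1) pq] orb_eq[of p x] by auto
    then show ?thesis using that unfolding orb_def by auto
  qed
  ultimately have "(P^^b) ((P^^j) p) = (P^^b) ((P^^k) p)"
    using comm[of b j p] comm[of b k p] by simp
  from pinj[OF this] show ?thesis using k j by simp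
qed

lemma rho_w: assumes "x \<in> S" shows "w (rho x) = w x"
proof -
  obtain p q where pq: "sel (orb x) = (p,q)" by fastforce
  obtain k where k: "(P^^k) p = x" using base[OF assms pq] by blast
  note sp = sel_prop[OF assms pq]
  have qp: "q \<in> orb p" using sp orb_eq[of p x] by auto
  then obtain b where b: "q = (P^^b) p" unfolding orb_def by auto
  have r: "rho x = (P^^(M*k)) q" using rho_char[OF assms pq k] .
  show ?thesis
  proof (cases "x = p")
    case True
    then have "rho x = q" using rho_char[OF assms pq, of 0] by simp
    then show ?thesis using sp True by simp
  next
    case xp: False
    show ?thesis
    proof (cases "x = q")
      case True
      then have "rho x = (P^^(M*b)) q" using rho_char[OF assms pq] b by simp
      then have "rho x = p" using b inv1 by simp
      then show ?thesis using sp True by simp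
    next
      case xq: False
      have wx: "w x = 0" using sp xp xq orb_self by blast
      have n1: "rho x \<noteq> p"
      proof
        assume "rho x = p"
        then have "(P^^k) (rho x) = x" using k by simp
        then have "q = x" using r inv2 by simp
        then show False using xq by simp
      qed
      have n2: "rho x \<noteq> q"
      proof
        assume "rho x = q"
        then have e: "(P^^(M*k)) q = q" using r by metis
        have kq: "(P^^k) q = q" using inv2[of k q] unfolding e .
        have "(P^^b) x = (P^^b) ((P^^k) p)" using k by simp
        also have "\<dots> = (P^^k) ((P^^b) p)" by (rule comm)
        also have "\<dots> = (P^^b) p" using kq b by simp
        finally have "(P^^b) x = (P^^b) p" .
        then show False using pinj xp by blast
      qed
      have "rho x \<in> orb x" using rho_orb[OF assms] .
      then have "w (rho x) = 0" using sp n1 n2 by blast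
      then show ?thesis using wx by simp
    qed
  qed
qed

end

lemma good_lemma:
  fixes w :: "nat \<Rightarrow> nat" and S Ob :: "nat set" and x :: nat
  assumes "finite S" "Ob \<subseteq> S" "x \<in> Ob" "sum w S \<le> 2"
  shows "\<exists>p q. p \<in> Ob \<and> q \<in> Ob \<and> w p = w q \<and> (\<forall>y\<in>Ob. w y \<noteq> 0 \<longrightarrow> y = p \<or> y = q)"
proof -
  define Z where "Z = {y\<in>Ob. w y \<noteq> 0}"
  have memZ: "y \<in> Z \<longleftrightarrow> y \<in> Ob \<and> w y \<noteq> 0" for y unfolding Z_def by simp
  have ZS: "Z \<subseteq> S" using assms(2) memZ by auto
  have fZ: "finite Z" using assms(1) ZS by (rule finite_subset[rotated])
  have s1: "card Z \<le> sum w Z"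
  proof -
    have "card Z = (\<Sum>y\<in>Z. 1)" by simp
    also have "\<dots> \<le> sum w Z" by (rule sum_mono) (use memZ in auto)
    finally show ?thesis .
  qed
  have sZ: "sum w Z \<le> 2"
    using sum_mono2[OF assms(1) ZS, of w] assms(4) by simp
  have cZ: "card Z \<le> 2" using s1 sZ by simp
  consider "card Z = 0" | "card Z = 1" | "card Z = 2" using cZ by linarith
  then show ?thesis
  proof cases
    case 1
    then have "Z = {}" using fZ by simp
    then have "\<forall>y\<in>Ob. w y \<noteq> 0 \<longrightarrow> y = x \<or> y = x" using memZ by auto
    then show ?thesis using assms(3) by blast
  next
    case 2
    then obtain z where z: "Z = {z}" using card_1_singletonE by blast
    then have "z \<in> Ob" using memZ by auto
    moreover have "\<forall>y\<in>Ob. w y \<noteq> 0 \<longrightarrow> y = z \<or> y = z" using memZ z by auto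
    ultimately show ?thesis by blast
  next
    case 3
    then obtain y z where yz: "Z = {y,z}" "y \<noteq> z" unfolding card_2_iff by blast
    then have "w y + w z \<le> 2" using sZ by simp
    moreover have "w y \<noteq> 0" "w z \<noteq> 0" "y \<in> Ob" "z \<in> Ob" using memZ yz by auto
    ultimately have "w y = w z" by linarith
    moreover have "\<forall>u\<in>Ob. w u \<noteq> 0 \<longrightarrow> u = y \<or> u = z" using memZ yz by auto
    ultimately show ?thesis using \<open>y \<in> Ob\<close> \<open>z \<in> Ob\<close> by blast
  qed
qed

theorem lemma2p12:
  fixes n :: nat and X :: "(nat \<Rightarrow> nat) \<times> (nat \<Rightarrow> nat)"
  assumes "n \<ge> 1"
    and "weighted_perm n X"
    and "(\<Sum>i=1..n. snd X i) \<le> 2"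
  shows "same_wct n X (wdagger X)"
proof -
  define P where "P = fst X"
  define w where "w = snd X"
  define S where "S = {1..n}"
  have perm: "P permutes S" using assms(2) unfolding weighted_perm_def P_def S_def by simp
  then have "permutation P" unfolding permutation_permutes S_def by blast
  then obtain N where PN: "P ^^ N = id" and Npos: "N > 0" by (rule permutation_is_nilpotent)
  have Pcl: "x \<in> S \<Longrightarrow> P x \<in> S" for x using perm by (simp add: permutes_in_image)
  have wS: "sum w S \<le> 2" using assms(3) unfolding w_def S_def .
  have orbS: "range (\<lambda>k. (P^^k) x) \<subseteq> S" if "x \<in> S" for x
  proof -
    have "(P^^k) x \<in> S" for k by (induction k) (auto simp: that Pcl)
    then show ?thesis by auto
  qed
  have good: "\<exists>p q. p \<in> range (\<lambda>k. (P^^k) x) \<and> q \<in> range (\<lambda>k. (P^^k) x)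
         \<and> w p = w q \<and> (\<forall>y\<in>range (\<lambda>k. (P^^k) x). w y \<noteq> 0 \<longrightarrow> y = p \<or> y = q)"
    if x: "x \<in> S" for x
  proof (rule good_lemma[of S])
    show "finite S" unfolding S_def by simp
    show "range (\<lambda>k. (P^^k) x) \<subseteq> S" using orbS[OF x] .
    show "x \<in> range (\<lambda>k. (P^^k) x)" using rangeI[of "\<lambda>k. (P^^k) x" 0] by simp
    show "sum w S \<le> 2" using wS .
  qed
  interpret wp P N w S
    unfolding wp_def using PN Npos Pcl good by blast
  have invP: "inv P = P ^^ M"
  proof (rule inv_unique_comp)
    show "P \<circ> P ^^ M = id" using PN Npos unfolding M_def
      by (metis Suc_diff_1 funpow.simps(2))
    show "P ^^ M \<circ> P = id" using PN Npos unfolding M_def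
      by (metis Suc_diff_1 funpow_Suc_right)
  qed
  have PM: "P ((P^^M) x) = x" for x using invP perm
    by (metis permutes_inverses(1))
  define f where "f = P \<circ> rho"
  have rhobij: "bij_betw rho S S"
  proof -
    have "inj_on rho S" using rho_inj by (auto simp: inj_on_def)
    moreover have "rho ` S \<subseteq> S" using rho_S by auto
    then have "rho ` S = S" using endo_inj_surj[of S rho] \<open>inj_on rho S\<close> S_def by simp
    ultimately show ?thesis by (simp add: bij_betw_def)
  qed
  have fbij: "bij_betw f S S" unfolding f_def
    using bij_betw_trans[OF rhobij permutes_imp_bij[OF perm]] .
  have key: "wedge n X v1 v2 a \<longleftrightarrow> wedge n (wdagger X) (f v1) (f v2) a"
    if v: "v1 \<in> S" "v2 \<in> S" for v1 v2 a
  proof -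
    have fv1: "f v1 \<in> S" using fbij v by (metis bij_betwE)
    have i1: "inv P (f v1) = rho v1" unfolding f_def invP using inv1[of 1 "rho v1"]
      unfolding M_def by simp
    have r: "P (rho (P v1)) = rho v1" using rho_P[OF v(1)] PM by simp
    have "f v2 = rho v1 \<longleftrightarrow> v2 = P v1"
    proof
      assume "f v2 = rho v1"
      then have "P (rho v2) = P (rho (P v1))" using r unfolding f_def by simp
      then have "rho v2 = rho (P v1)" using permutes_inj[OF perm] by (simp add: inj_eq)
      then show "v2 = P v1" using rho_inj v Pcl by blast
    next
      assume "v2 = P v1" then show "f v2 = rho v1" using r unfolding f_def by simp
    qed
    then show ?thesis
      unfolding wedge_def wdagger_def using fv1 v i1 rho_w[OF v(1)]
      by (auto simp: S_def P_def[symmetric] w_def[symmetric])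
  qed
  show ?thesis unfolding same_wct_def using fbij key S_def by blast
qed

end
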